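(* Let $N\ge1$, $q\in[1,\infty)$ and let $f\in L^\infty(\mathbb{R}^N)$ satisfy \[\limsup_{r\uparrow1}(1-r)^{1/q}\|f\|_{B^r_{\infty,q}(\mathbb{R}^N)}<\infty.\] Then $f\in C^{0,1}(\mathbb{R}^N)$. Moreover, there are constants $0<c\le C$ independent of $f$ such that \[c\,q^{-1/q}[f]_{C^{0,1}(\mathbb{R}^N)}\le \limsup_{r\uparrow1}(1-r)^{1/q}\|f\|_{B^r_{\infty,q}(\mathbb{R}^N)}\le C\,q^{-1/q}[f]_{C^{0,1}(\mathbb{R}^N)}.\]
   Context: For $r\in(0,1)$ and $q\in[1,\infty)$, $\|f\|_{B^r_{\infty,q}}:=\|f\|_{L^\infty}+\left(\int_{\mathbb{R}^N}\|f(\cdot+h)-f\|_{L^\infty}^q\frac{\mathrm{d}h}{|h|^{N+rq}}\right)^{1/q}$ (first-order differences). $C^{0,1}(\mathbb{R}^N)$ is the set of $f\in L^\infty$ with $[f]_{C^{0,1}}:=\sup_{h\ne0}|h|^{-1}\|f(\cdot+h)-f\|_{L^\infty}<\infty$. *)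

theory Defs
  imports "HOL-Analysis.Analysis" "HOL-Probability.Essential_Supremum"
begin

definition Linf_norm :: "('a::euclidean_space \<Rightarrow> real) \<Rightarrow> ereal" where
  "Linf_norm g = esssup lebesgue (\<lambda>x. ereal \<bar>g x\<bar>)"

definition in_Linf :: "('a::euclidean_space \<Rightarrow> real) \<Rightarrow> bool" where
  "in_Linf f \<longleftrightarrow> f \<in> borel_measurable lebesgue \<and> Linf_norm f < \<infinity>"

definition diff_norm :: "('a::euclidean_space \<Rightarrow> real) \<Rightarrow> 'a \<Rightarrow> ereal" where
  "diff_norm f h = Linf_norm (\<lambda>x. f (x + h) - f x)"

text \<open>Besov norm B^r_{infty,q} (with first-order differences), valued in [0,infinity].
  For f in L-infinity the difference norms are finite reals (<= 2 ||f||), so taking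
  real_of_ereal loses nothing.\<close>
definition besov_norm :: "real \<Rightarrow> real \<Rightarrow> ('a::euclidean_space \<Rightarrow> real) \<Rightarrow> ereal" where
  "besov_norm r q f =
     (let I = (\<integral>\<^sup>+ h. ennreal (real_of_ereal (diff_norm f h) powr q
                        / norm h powr (real DIM('a) + r * q)) \<partial>lborel)
      in Linf_norm f + (if I = \<infinity> then \<infinity> else ereal (enn2real I powr (1 / q))))"

definition lip_seminorm :: "('a::euclidean_space \<Rightarrow> real) \<Rightarrow> ereal" where
  "lip_seminorm f = (SUP h\<in>-{0}. diff_norm f h / ereal (norm h))"

definition in_C01 :: "('a::euclidean_space \<Rightarrow> real) \<Rightarrow> bool" where
  "in_C01 f \<longleftrightarrow> in_Linf f \<and> lip_seminorm f < \<infinity>"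

definition besov_limsup :: "real \<Rightarrow> ('a::euclidean_space \<Rightarrow> real) \<Rightarrow> ereal" where
  "besov_limsup q f = Limsup (at_left 1) (\<lambda>r. ereal ((1 - r) powr (1 / q)) * besov_norm r q f)"

end

theory Submission
  imports Defs
begin


lemma lborel_translate_eq:
  "distr lborel borel (\<lambda>x. k + x) = (lborel :: 'a::euclidean_space measure)"
proof -
  have "lborel = density (distr lborel borel (\<lambda>x. k + 1 *\<^sub>R x)) (\<lambda>_. \<bar>1::real\<bar>^DIM('a))"
    by (rule lborel_affine) simp
  thus ?thesis by (simp add: density_1)
qed

lemma lborel_reflect_eq:
  "distr lborel borel (\<lambda>x. k - x) = (lborel :: 'a::euclidean_space measure)"
proof -
  have "lborel = density (distr lborel borel (\<lambda>x. k + (-1) *\<^sub>R x)) (\<lambda>_. \<bar>-1::real\<bar>^DIM('a))"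
    by (rule lborel_affine) simp
  thus ?thesis by (simp add: density_1)
qed

lemma AE_lborel_translate:
  fixes k :: "'a::euclidean_space"
  assumes P: "Measurable.pred borel P" and ae: "AE x in lborel. P x"
  shows "AE x in lborel. P (x + k)"
proof -
  have "almost_everywhere (distr lborel borel (\<lambda>x. k + x)) P"
    using ae by (simp only: lborel_translate_eq)
  hence "AE x in lborel. P (k + x)"
    using P by (subst (asm) AE_distr_iff) auto
  thus ?thesis by (simp add: add.commute)
qed

lemma emeasure_lborel_reflect:
  fixes k :: "'a::euclidean_space"
  assumes S: "S \<in> sets borel"
  shows "emeasure lborel {x. k - x \<in> S} = emeasure lborel S"
proof -
  have "emeasure lborel S = emeasure (distr lborel borel (\<lambda>x. k - x)) S"
    by (simp only: lborel_reflect_eq)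
  also have "\<dots> = emeasure lborel ((\<lambda>x. k - x) -` S \<inter> space lborel)"
    using S by (subst emeasure_distr) auto
  finally show ?thesis by (simp add: vimage_def)
qed

lemma esssup_lebesgue_lborel:
  fixes F :: "'a::euclidean_space \<Rightarrow> ereal"
  assumes "F \<in> borel_measurable borel"
  shows "esssup lebesgue F = esssup lborel F"
proof -
  have m1: "F \<in> borel_measurable lborel" using assms by simp
  have m2: "F \<in> borel_measurable lebesgue" using m1 by (rule measurable_completion)
  have "ae_filter (lebesgue :: 'a measure) = ae_filter lborel"
    by (rule filter_eqI) (simp add: AE_completion_iff)
  thus ?thesis using m1 m2 by (simp add: esssup_def)
qed

definition W :: "('a::euclidean_space \<Rightarrow> real) \<Rightarrow> 'a \<Rightarrow> ereal" where
  "W g h = esssup lborel (\<lambda>x. ereal \<bar>g (x + h) - g x\<bar>)"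

lemma diff_norm_W:
  fixes f g :: "'a::euclidean_space \<Rightarrow> real"
  assumes f: "f \<in> borel_measurable lebesgue" and g: "g \<in> borel_measurable borel"
    and ae: "AE x in lborel. f x = g x"
  shows "diff_norm f h = W g h"
proof -
  obtain N where N: "N \<in> null_sets lborel" "\<And>x. x \<notin> N \<Longrightarrow> f x = g x"
    using ae by (auto simp: eventually_ae_filter)
  have "{x. x - (-h) \<in> N} \<in> null_sets lborel" using N(1) by (rule null_sets_translation)
  hence "{x. x + h \<in> N} \<in> null_sets lborel" by simp
  hence "AE x in lborel. x \<notin> {x. x + h \<in> N}" by (rule AE_not_in)
  hence "AE x in lborel. x + h \<notin> N" by simp
  moreover have "AE x in lborel. x \<notin> N" using N(1) by (rule AE_not_in)
  ultimately have ae2: "AE x in lborel. f (x + h) - f x = g (x + h) - g x"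
    using N(2) by auto
  have gm: "(\<lambda>x. g (x + h) - g x) \<in> borel_measurable borel" using g by measurable
  have ae3: "AE x in lebesgue. g (x + h) - g x = f (x + h) - f x"
    using ae2 by (auto simp: AE_completion_iff)
  have fm: "(\<lambda>x. f (x + h) - f x) \<in> borel_measurable lebesgue"
    by (rule borel_measurable_AE[OF _ ae3]) (use gm in \<open>simp add: measurable_completion\<close>)
  have fmE: "(\<lambda>x. ereal \<bar>f (x + h) - f x\<bar>) \<in> borel_measurable lebesgue"
    using fm by (intro borel_measurable_ereal borel_measurable_abs)
  have gmE: "(\<lambda>x. ereal \<bar>g (x + h) - g x\<bar>) \<in> borel_measurable borel"
    using gm by (intro borel_measurable_ereal borel_measurable_abs)
  have gmE2: "(\<lambda>x. ereal \<bar>g (x + h) - g x\<bar>) \<in> borel_measurable lebesgue"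
    using gmE by (simp add: measurable_completion)
  have "diff_norm f h = esssup lebesgue (\<lambda>x. ereal \<bar>f (x + h) - f x\<bar>)"
    by (simp add: diff_norm_def Linf_norm_def)
  also have "\<dots> = esssup lebesgue (\<lambda>x. ereal \<bar>g (x + h) - g x\<bar>)"
    by (rule esssup_AE_cong[OF fmE gmE2]) (use ae2 in \<open>auto simp: AE_completion_iff\<close>)
  also have "\<dots> = W g h"
    unfolding W_def by (rule esssup_lebesgue_lborel[OF gmE])
  finally show ?thesis .
qed



context
  fixes g :: "'a::euclidean_space \<Rightarrow> real"
  assumes g[measurable]: "g \<in> borel_measurable borel"
begin

lemma W_AE: "AE x in lborel. ereal \<bar>g (x + h) - g x\<bar> \<le> W g h"
  unfolding W_def by (rule esssup_AE)

lemma W_AE_shift: "AE x in lborel. ereal \<bar>g (x + k + h) - g (x + k)\<bar> \<le> W g h"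
proof -
  have "Measurable.pred borel (\<lambda>x. ereal \<bar>g (x + h) - g x\<bar> \<le> W g h)" by measurable
  from AE_lborel_translate[OF this W_AE] show ?thesis .
qed

lemma W_meas_fun: "(\<lambda>x. ereal \<bar>g (x + h) - g x\<bar>) \<in> borel_measurable lborel"
  by measurable

lemma W_sub: "W g (h + k) \<le> W g h + W g k"
proof -
  have "AE x in lborel. ereal \<bar>g (x + (h + k)) - g x\<bar> \<le> W g h + W g k"
    using W_AE_shift[of k h] W_AE[of k]
  proof eventually_elim
    case (elim x)
    have "ereal \<bar>g (x + (h + k)) - g x\<bar> \<le> ereal \<bar>g (x + k + h) - g (x + k)\<bar> + ereal \<bar>g (x + k) - g x\<bar>"
      by (simp add: algebra_simps)
    also have "\<dots> \<le> W g h + W g k" using elim by (rule add_mono)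
    finally show ?case .
  qed
  thus ?thesis unfolding W_def by (intro esssup_I) measurable
qed

lemma W_neg_le: "W g (-h) \<le> W g h"
proof -
  have "AE x in lborel. ereal \<bar>g (x + (-h)) - g x\<bar> \<le> W g h"
    using W_AE_shift[of "-h" h] by eventually_elim (simp add: abs_minus_commute)
  thus ?thesis unfolding W_def by (intro esssup_I) measurable
qed

lemma W_neg: "W g (-h) = W g h"
  using W_neg_le[of h] W_neg_le[of "-h"] by simp

lemma W_nonneg: "0 \<le> W g h"
proof -
  have "esssup lborel (\<lambda>x::'a. 0::ereal) \<le> W g h"
    unfolding W_def by (rule esssup_mono[where f="\<lambda>x::'a. 0::ereal"]) auto
  thus ?thesis by (simp add: esssup_const)
qed

lemma W_zero: "W g 0 = 0"
proof -
  have "W g 0 \<le> 0" unfolding W_def by (intro esssup_I) auto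
  thus ?thesis using W_nonneg[of 0] by simp
qed

lemma W_bound:
  "W g h \<le> 2 * esssup lborel (\<lambda>x. ereal \<bar>g x\<bar>)"
proof -
  let ?B = "esssup lborel (\<lambda>x. ereal \<bar>g x\<bar>)"
  have a1: "AE x in lborel. ereal \<bar>g x\<bar> \<le> ?B" by (rule esssup_AE)
  have "Measurable.pred borel (\<lambda>x. ereal \<bar>g x\<bar> \<le> ?B)" by measurable
  from AE_lborel_translate[OF this a1] have a2: "AE x in lborel. ereal \<bar>g (x + h)\<bar> \<le> ?B" .
  have "AE x in lborel. ereal \<bar>g (x + h) - g x\<bar> \<le> 2 * ?B"
    using a1 a2
  proof eventually_elim
    case (elim x)
    have "ereal \<bar>g (x + h) - g x\<bar> \<le> ereal \<bar>g (x + h)\<bar> + ereal \<bar>g x\<bar>" by simp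
    also have "\<dots> \<le> ?B + ?B" using elim by (intro add_mono) auto
    also have "?B + ?B = 2 * ?B" by (cases ?B) auto
    finally show ?case .
  qed
  thus ?thesis unfolding W_def by (intro esssup_I) measurable
qed

lemma W_measurable: "W g \<in> borel_measurable borel"
proof (rule borel_measurableI_greater)
  fix y :: ereal
  define Q where "Q = {p \<in> space (lborel \<Otimes>\<^sub>M lborel). y < ereal \<bar>g (snd p + fst p) - g (snd p)\<bar>}"
  have Q: "Q \<in> sets (lborel \<Otimes>\<^sub>M (lborel::'a measure))" unfolding Q_def by measurable
  have em: "(\<lambda>h. emeasure lborel (Pair h -` Q)) \<in> borel_measurable (lborel::'a measure)"
    by (rule sigma_finite_measure.measurable_emeasure_Pair[OF sigma_finite_lborel Q])
  have eq: "{x \<in> space borel. y < W g x} = (\<lambda>h. emeasure lborel (Pair h -` Q)) -` {0<..} \<inter> space lborel"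
  proof (intro set_eqI iffI)
    fix h assume "h \<in> {x \<in> space borel. y < W g x}"
    hence "y < W g h" by simp
    hence "emeasure lborel {x \<in> space lborel. y < ereal \<bar>g (x + h) - g x\<bar>} > 0"
      unfolding W_def by (intro esssup_pos_measure) measurable
    moreover have "{x \<in> space lborel. y < ereal \<bar>g (x + h) - g x\<bar>} = Pair h -` Q"
      by (auto simp: Q_def space_pair_measure add.commute)
    ultimately show "h \<in> (\<lambda>h. emeasure lborel (Pair h -` Q)) -` {0<..} \<inter> space lborel" by simp
  next
    fix h assume "h \<in> (\<lambda>h. emeasure lborel (Pair h -` Q)) -` {0<..} \<inter> space lborel"
    hence pos: "emeasure lborel (Pair h -` Q) > 0" by simp
    show "h \<in> {x \<in> space borel. y < W g x}"
    proof (rule ccontr)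
      assume "h \<notin> {x \<in> space borel. y < W g x}"
      hence le: "W g h \<le> y" by (simp add: not_less)
      have "Pair h -` Q \<subseteq> {x \<in> space lborel. W g h < ereal \<bar>g (x + h) - g x\<bar>}"
        using le by (auto simp: Q_def space_pair_measure add.commute)
      hence "emeasure lborel (Pair h -` Q) \<le> emeasure lborel {x \<in> space lborel. W g h < ereal \<bar>g (x + h) - g x\<bar>}"
        by (intro emeasure_mono) measurable
      also have "\<dots> = 0" unfolding W_def by (rule esssup_zero_measure)
      finally show False using pos by simp
    qed
  qed
  show "{x \<in> space borel. y < W g x} \<in> sets borel"
    unfolding eq using em by measurable
qed

end


lemma block_value:
  fixes a \<rho> r q V :: real and n :: nat
  assumes "\<rho> > 0" "a \<ge> 0"
  shows "(a*\<rho>/2) powr q / \<rho> powr (real n + r*q) * (V * (\<rho>/8)^n / 2)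
       = V / 8^n / 2 * (a/2) powr q * \<rho> powr (q*(1-r))"
proof -
  have e1: "(a*\<rho>/2) powr q = (a/2) powr q * \<rho> powr q"
    using assms by (simp add: powr_mult[symmetric])
  have e2: "(\<rho>/8)^n = \<rho> powr (real n) / 8^n"
    using assms by (simp add: power_divide powr_realpow)
  have e3: "\<rho> powr (q*(1-r)) = \<rho> powr q * \<rho> powr (real n) / \<rho> powr (real n + r*q)"
  proof -
    have "q*(1-r) = (q + real n) - (real n + r*q)" by (simp add: algebra_simps)
    hence "\<rho> powr (q*(1-r)) = \<rho> powr ((q + real n) - (real n + r*q))" by simp
    also have "\<dots> = \<rho> powr q * \<rho> powr (real n) / \<rho> powr (real n + r*q)"
      by (simp add: powr_diff powr_add)
    finally show ?thesis .
  qed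
  show ?thesis unfolding e1 e2 e3 by (simp add: field_simps)
qed

lemma geom_lower:
  fixes s :: real
  assumes s: "s > 0"
  shows "(\<Sum>k\<in>{..<nat (ceiling (1/s))}. (2 powr (- s)) ^ k) \<ge> 1 / (2 * s)"
proof -
  let ?x = "2 powr (- s)" and ?n = "nat (ceiling (1/s))"
  have x0: "0 < ?x" by simp
  have x1: "?x < 1" using s by (simp add: powr_minus_divide)
  have "1 - ?x \<le> s"
  proof -
    have "?x = exp (-s * ln 2)" by (simp add: powr_def)
    also have "\<dots> \<ge> 1 + (-s * ln 2)" by (rule exp_ge_add_one_self)
    finally have "1 - ?x \<le> s * ln 2" by simp
    also have "\<dots> \<le> s * 1" using s ln_2_less_1 by (intro mult_left_mono) auto
    finally show ?thesis by simp
  qed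
  have sn: "s * real ?n \<ge> 1"
  proof -
    have "real ?n \<ge> 1/s" by linarith
    hence "s * (1/s) \<le> s * real ?n" using s by (intro mult_left_mono) auto
    thus ?thesis using s by simp
  qed
  have "?x ^ ?n = 2 powr (- (s * real ?n))"
    by (simp add: powr_realpow[symmetric] powr_powr)
  also have "\<dots> \<le> 2 powr (-1)" using sn by (intro powr_mono) auto
  finally have xn: "?x ^ ?n \<le> 1/2" by simp
  have "(\<Sum>k<?n. ?x^k) = (1 - ?x ^ ?n) / (1 - ?x)"
    using x1 by (simp add: sum_gp_strict)
  also have "\<dots> \<ge> (1/2) / s"
    using xn x1 s \<open>1 - ?x \<le> s\<close> by (intro frac_le) auto
  finally show ?thesis by simp
qed

lemma ennreal_half_2: "ennreal (1/2) * 2 = 1"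
proof -
  have "ennreal (1/2) * ennreal 2 = ennreal (1/2 * 2)" by (rule ennreal_mult[symmetric]) simp_all
  thus ?thesis by simp
qed


lemma dist_half_reflect: fixes w y :: "'a::real_normed_vector"
  shows "dist ((1/2) *\<^sub>R w) (w - y) = dist ((1/2) *\<^sub>R w) y"
proof -
  have a: "(1/2) *\<^sub>R w - w = - ((1/2) *\<^sub>R w)"
  proof -
    have "(1/2) *\<^sub>R w - w = ((1/2) - 1) *\<^sub>R w" by (simp only: scaleR_diff_left scaleR_one)
    also have "((1/2) - 1::real) = -(1/2)" by simp
    finally show ?thesis by (simp only: scaleR_minus_left)
  qed
  have e: "(1/2) *\<^sub>R w - (w - y) = -((1/2) *\<^sub>R w - y)"
    using a by (simp add: algebra_simps)
  show ?thesis unfolding dist_norm e norm_minus_cancel ..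
qed

context
  fixes \<omega> :: "'a::euclidean_space \<Rightarrow> real"
  assumes om_meas[measurable]: "\<omega> \<in> borel_measurable borel"
    and om_nonneg: "\<And>h. 0 \<le> \<omega> h"
    and om_sub: "\<And>h k. \<omega> (h + k) \<le> \<omega> h + \<omega> k"
begin

lemma om_halves: "\<omega> (v /\<^sub>R 2 ^ k) \<ge> \<omega> v / 2 ^ k"
proof (induction k)
  case 0 show ?case by simp
next
  case (Suc k)
  let ?w = "v /\<^sub>R 2 ^ Suc k"
  have "v /\<^sub>R 2 ^ k = ?w + ?w" by (simp add: scaleR_2[symmetric])
  hence "\<omega> (v /\<^sub>R 2 ^ k) \<le> 2 * \<omega> ?w" using om_sub[of ?w ?w] by simp
  have "\<omega> v \<le> 2 ^ k * \<omega> (v /\<^sub>R 2 ^ k)" using Suc by (simp add: field_simps)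
  moreover have "2 ^ k * \<omega> (v /\<^sub>R 2 ^ k) \<le> 2 ^ k * (2 * \<omega> ?w)"
    by (rule mult_left_mono) (use \<open>\<omega> (v /\<^sub>R 2 ^ k) \<le> 2 * \<omega> ?w\<close> in simp_all)
  moreover have "2 ^ k * (2 * \<omega> ?w) = \<omega> ?w * 2 ^ Suc k" by simp
  ultimately have "\<omega> v \<le> \<omega> ?w * 2 ^ Suc k" by linarith
  thus ?case by (subst pos_divide_le_eq) simp_all
qed

definition blk :: "real \<Rightarrow> 'a \<Rightarrow> 'a set" where
  "blk a w = {y \<in> ball ((1/2) *\<^sub>R w) (norm w / 8). a * norm w / 2 \<le> \<omega> y}"

lemma blk_sets: "blk a w \<in> sets borel"
  unfolding blk_def by measurable

lemma blk_norm:
  assumes "y \<in> blk a w"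
  shows "3/8 * norm w < norm y" "norm y < 5/8 * norm w"
proof -
  have d: "norm (y - (1/2) *\<^sub>R w) < norm w / 8"
    using assms by (simp add: blk_def dist_norm norm_minus_commute)
  have "norm ((1/2) *\<^sub>R w) = norm (y - (y - (1/2) *\<^sub>R w))" by simp
  also have "\<dots> \<le> norm y + norm (y - (1/2) *\<^sub>R w)" by (rule norm_triangle_ineq4)
  finally have "norm ((1/2) *\<^sub>R w) \<le> norm y + norm (y - (1/2) *\<^sub>R w)" .
  thus "3/8 * norm w < norm y" using d by simp
  have "norm y = norm ((1/2) *\<^sub>R w + (y - (1/2) *\<^sub>R w))" by simp
  also have "\<dots> \<le> norm ((1/2) *\<^sub>R w) + norm (y - (1/2) *\<^sub>R w)" by (rule norm_triangle_ineq)
  finally have "norm y \<le> norm ((1/2) *\<^sub>R w) + norm (y - (1/2) *\<^sub>R w)" .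
  thus "norm y < 5/8 * norm w" using d by simp
qed

lemma blk_measure:
  assumes a: "a * norm w \<le> \<omega> w"
  shows "ennreal (unit_ball_vol (real DIM('a)) * (norm w / 8) ^ DIM('a)) \<le> 2 * emeasure lborel (blk a w)"
proof -
  let ?B = "ball ((1/2) *\<^sub>R w) (norm w / 8)"
  let ?S = "blk a w"
  have sub: "?B \<subseteq> ?S \<union> {y. w - y \<in> ?S}"
  proof
    fix y assume y: "y \<in> ?B"
    have "dist ((1/2) *\<^sub>R w) (w - y) = dist ((1/2) *\<^sub>R w) y" by (rule dist_half_reflect)
    hence y2: "w - y \<in> ?B" using y by simp
    have "\<omega> w \<le> \<omega> y + \<omega> (w - y)" using om_sub[of y "w - y"] by simp
    hence "a * norm w / 2 \<le> \<omega> y \<or> a * norm w / 2 \<le> \<omega> (w - y)" using a by linarith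
    thus "y \<in> ?S \<union> {y. w - y \<in> ?S}" using y y2 by (auto simp: blk_def)
  qed
  have "emeasure lborel ?B \<le> emeasure lborel (?S \<union> {y. w - y \<in> ?S})"
    by (rule emeasure_mono[OF sub]) (use blk_sets in measurable)
  also have "\<dots> \<le> emeasure lborel ?S + emeasure lborel {y. w - y \<in> ?S}"
    by (rule emeasure_subadditive) (use blk_sets in measurable)
  also have "emeasure lborel {y. w - y \<in> ?S} = emeasure lborel ?S"
    by (rule emeasure_lborel_reflect[OF blk_sets])
  also have "emeasure lborel ?S + emeasure lborel ?S = 2 * emeasure lborel ?S"
    by (simp add: mult_2)
  finally show ?thesis by (simp add: emeasure_ball)
qed

lemma blk_measure2:
  assumes a: "a * norm w \<le> \<omega> w"
  shows "ennreal (unit_ball_vol (real DIM('a)) * (norm w / 8) ^ DIM('a) / 2) \<le> emeasure lborel (blk a w)"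
proof -
  let ?X = "unit_ball_vol (real DIM('a)) * (norm w / 8) ^ DIM('a)"
  have X: "0 \<le> ?X" by simp
  have "ennreal (?X / 2) = ennreal (1/2 * ?X)" by simp
  also have "\<dots> = ennreal (1/2) * ennreal ?X" by (rule ennreal_mult) (simp_all add: X)
  also have "\<dots> \<le> ennreal (1/2) * (2 * emeasure lborel (blk a w))"
    by (rule mult_left_mono[OF blk_measure[OF a]]) simp
  also have "\<dots> = (ennreal (1/2) * 2) * emeasure lborel (blk a w)" by (simp only: mult.assoc)
  also have "\<dots> = emeasure lborel (blk a w)" by (simp only: ennreal_half_2 mult_1)
  finally show ?thesis .
qed

lemma blk_integrand:
  assumes h: "h \<in> blk a w" and a: "0 \<le> a" and e: "0 \<le> e" and q: "0 \<le> q"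
  shows "(a * norm w / 2) powr q / norm w powr e \<le> \<omega> h powr q / norm h powr e"
proof -
  have n1: "3/8 * norm w < norm h" and n2: "norm h < 5/8 * norm w" using blk_norm[OF h] by auto
  have hpos: "0 < norm h" using n1 norm_ge_zero[of w] by linarith
  have le: "a * norm w / 2 \<le> \<omega> h" using h by (simp add: blk_def)
  show ?thesis
  proof (rule frac_le)
    show "0 \<le> \<omega> h powr q" by simp
    show "(a * norm w / 2) powr q \<le> \<omega> h powr q"
      using a le q by (intro powr_mono2) auto
    show "0 < norm h powr e" using hpos by simp
    have "norm h \<le> norm w" using n2 hpos by linarith
    thus "norm h powr e \<le> norm w powr e" using e by (intro powr_mono2) auto
  qed
qed

lemma blk_disjoint:
  assumes "v \<noteq> 0" "h \<in> blk a (v /\<^sub>R 2 ^ j)" "h \<in> blk a (v /\<^sub>R 2 ^ k)"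
  shows "j = k"
proof (rule ccontr)
  assume ne: "j \<noteq> k"
  have nv: "0 < norm v" using assms by simp
  have main: False if jk: "j < k" and hj: "h \<in> blk a (v /\<^sub>R 2 ^ j)" and hk: "h \<in> blk a (v /\<^sub>R 2 ^ k)" for j k
  proof -
    have "(2::real) ^ Suc j \<le> 2 ^ k" using jk by (intro power_increasing) auto
    hence "norm v / 2 ^ k \<le> norm v / 2 ^ Suc j" using nv by (intro divide_left_mono) auto
    moreover have nj: "norm (v /\<^sub>R 2 ^ j) = norm v / 2 ^ j" and nk: "norm (v /\<^sub>R 2 ^ k) = norm v / 2 ^ k"
      by (simp_all add: divide_inverse mult.commute)
    moreover have "norm v / 2 ^ Suc j = (norm v / 2 ^ j) / 2" by simp
    moreover have gen: "\<And>A B H::real. B \<le> A/2 \<Longrightarrow> 3/8*A < H \<Longrightarrow> H < 5/8*B \<Longrightarrow> 0 \<le> A \<Longrightarrow> False"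
      by linarith
    ultimately show False using blk_norm(1)[OF hj, unfolded nj] blk_norm(2)[OF hk, unfolded nk] nv
      by (metis divide_nonneg_nonneg norm_ge_zero zero_le_power zero_le_numeral)
  qed
  show False
    using ne main[of j k] main[of k j] assms(2,3) by (cases "j < k") auto
qed

lemma lower_integral:
  assumes v: "v \<noteq> 0" and a: "0 \<le> a" "a * norm v \<le> \<omega> v"
    and r: "0 < r" "r < 1" and q: "1 \<le> q"
  shows "ennreal (unit_ball_vol (real DIM('a)) / 8 ^ DIM('a) / 4 * (a/2) powr q
                  * norm v powr (q * (1 - r)) / (q * (1 - r)))
         \<le> (\<integral>\<^sup>+h. ennreal (\<omega> h powr q / norm h powr (real DIM('a) + r * q)) \<partial>lborel)"
proof -
  define N where "N = DIM('a)"
  define V where "V = unit_ball_vol (real N)"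
  define s where "s = q * (1 - r)"
  define e where "e = real N + r * q"
  define \<rho> where "\<rho> k = norm v / 2 ^ k" for k :: nat
  define w where "w k = v /\<^sub>R 2 ^ k" for k :: nat
  define c where "c k = (a * \<rho> k / 2) powr q / \<rho> k powr e" for k
  define n where "n = nat (ceiling (1/s))"
  define x where "x = (2::real) powr (- s)"
  have s: "0 < s" using r q by (simp add: s_def)
  have e: "0 \<le> e" using r q by (simp add: e_def)
  have nv: "0 < norm v" using v by simp
  have \<rho>pos: "0 < \<rho> k" for k using nv by (simp add: \<rho>_def)
  have nw: "norm (w k) = \<rho> k" for k by (simp add: w_def \<rho>_def divide_inverse mult.commute)
  have ww: "a * norm (w k) \<le> \<omega> (w k)" for k
  proof -
    have "a * norm v / 2 ^ k \<le> \<omega> v / 2 ^ k" using a by (intro divide_right_mono) auto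
    also have "\<dots> \<le> \<omega> (w k)" unfolding w_def by (rule om_halves)
    finally show ?thesis by (simp add: nw \<rho>_def)
  qed
  have c0: "0 \<le> c k" for k by (simp add: c_def)
  have pw: "(\<Sum>k\<in>{..<n}. ennreal (c k) * indicator (blk a (w k)) h)
            \<le> ennreal (\<omega> h powr q / norm h powr e)" for h
  proof (cases "\<exists>j<n. h \<in> blk a (w j)")
    case False
    hence "(\<Sum>k\<in>{..<n}. ennreal (c k) * indicator (blk a (w k)) h) = 0"
      by (intro sum.neutral) auto
    thus ?thesis by simp
  next
    case True
    then obtain j where j: "j < n" "h \<in> blk a (w j)" by auto
    have "(\<Sum>k\<in>{..<n}. ennreal (c k) * indicator (blk a (w k)) h)
        = (\<Sum>k\<in>{..<n}. if k = j then ennreal (c j) else 0)"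
    proof (intro sum.cong refl)
      fix k assume "k \<in> {..<n}"
      show "ennreal (c k) * indicator (blk a (w k)) h = (if k = j then ennreal (c j) else 0)"
      proof (cases "k = j")
        case True thus ?thesis using j by simp
      next
        case False
        hence "h \<notin> blk a (w k)" using blk_disjoint[OF v, of h a j k] j by (auto simp: w_def)
        thus ?thesis using False by simp
      qed
    qed
    also have "\<dots> = ennreal (c j)" using j by simp
    also have "\<dots> \<le> ennreal (\<omega> h powr q / norm h powr e)"
      using blk_integrand[OF j(2) a(1) e] q unfolding c_def nw by (intro ennreal_leI) auto
    finally show ?thesis .
  qed
  have F1: "(\<integral>\<^sup>+h. (\<Sum>k\<in>{..<n}. ennreal (c k) * indicator (blk a (w k)) h) \<partial>lborel)
        = (\<Sum>k\<in>{..<n}. ennreal (c k) * emeasure lborel (blk a (w k)))"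
  proof -
    have "(\<integral>\<^sup>+h. (\<Sum>k\<in>{..<n}. ennreal (c k) * indicator (blk a (w k)) h) \<partial>lborel)
          = (\<Sum>k\<in>{..<n}. \<integral>\<^sup>+h. ennreal (c k) * indicator (blk a (w k)) h \<partial>lborel)"
      by (rule nn_integral_sum) (use blk_sets in measurable)
    also have "\<dots> = (\<Sum>k\<in>{..<n}. ennreal (c k) * emeasure lborel (blk a (w k)))"
      by (intro sum.cong refl nn_integral_cmult_indicator) (use blk_sets in simp)
    finally show ?thesis .
  qed
  have F2: "(\<Sum>k\<in>{..<n}. ennreal (c k) * emeasure lborel (blk a (w k))) \<ge> (\<Sum>k\<in>{..<n}. ennreal (c k) * ennreal (V * (\<rho> k / 8) ^ N / 2))"
    by (intro sum_mono mult_left_mono) (use blk_measure2[OF ww] in \<open>simp_all add: nw V_def N_def\<close>)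
  have F3: "(\<Sum>k\<in>{..<n}. ennreal (c k) * ennreal (V * (\<rho> k / 8) ^ N / 2))
      = ennreal (\<Sum>k\<in>{..<n}. c k * (V * (\<rho> k / 8) ^ N / 2))"
  proof -
    have nn: "0 \<le> V * (\<rho> k / 8) ^ N / 2" for k using \<rho>pos[of k] by (simp add: V_def)
    have "(\<Sum>k\<in>{..<n}. ennreal (c k) * ennreal (V * (\<rho> k / 8) ^ N / 2))
        = (\<Sum>k\<in>{..<n}. ennreal (c k * (V * (\<rho> k / 8) ^ N / 2)))"
      by (intro sum.cong refl) (rule ennreal_mult[symmetric, OF c0 nn])
    also have "\<dots> = ennreal (\<Sum>k\<in>{..<n}. c k * (V * (\<rho> k / 8) ^ N / 2))"
      by (rule sum_ennreal) (use c0 nn in auto)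
    finally show ?thesis .
  qed
  have F4: "(\<Sum>k\<in>{..<n}. c k * (V * (\<rho> k / 8) ^ N / 2))
      = V / 8 ^ N / 2 * (a/2) powr q * norm v powr s * (\<Sum>k\<in>{..<n}. x ^ k)"
  proof -
    have "c k * (V * (\<rho> k / 8) ^ N / 2) = V / 8 ^ N / 2 * (a/2) powr q * norm v powr s * x ^ k" for k
    proof -
      have "c k * (V * (\<rho> k / 8) ^ N / 2) = V / 8 ^ N / 2 * (a/2) powr q * \<rho> k powr s"
        unfolding c_def e_def s_def by (rule block_value[OF \<rho>pos a(1)])
      also have "\<rho> k powr s = norm v powr s * x ^ k"
      proof -
        have "\<rho> k powr s = norm v powr s / (2 ^ k) powr s"
          unfolding \<rho>_def using nv by (simp add: powr_divide)
        also have "(2 ^ k :: real) powr s = 2 powr (real k * s)"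
          by (simp add: powr_realpow[symmetric] powr_powr)
        also have "norm v powr s / 2 powr (real k * s) = norm v powr s * x ^ k"
        proof -
          have "x ^ k = x powr real k" by (rule powr_realpow[symmetric]) (simp add: x_def)
          also have "\<dots> = 2 powr (- s * real k)" unfolding x_def by (rule powr_powr)
          also have "\<dots> = inverse (2 powr (real k * s))" by (simp add: powr_minus mult.commute)
          finally show ?thesis by (simp add: divide_inverse)
        qed
        finally show ?thesis .
      qed
      finally show ?thesis by (simp only: mult.assoc)
    qed
    thus ?thesis by (simp add: sum_distrib_left)
  qed
  have F5: "(\<Sum>k\<in>{..<n}. x ^ k) \<ge> 1 / (2 * s)"
    unfolding x_def n_def by (rule geom_lower[OF s])
  define K where "K = V / 8 ^ N / 2 * (a/2) powr q * norm v powr s"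
  have K0: "0 \<le> K" by (simp add: K_def V_def)
  have "ennreal (K * (1 / (2 * s))) \<le> ennreal (K * (\<Sum>k\<in>{..<n}. x ^ k))"
    by (intro ennreal_leI mult_left_mono F5 K0)
  also have "\<dots> = (\<Sum>k\<in>{..<n}. ennreal (c k) * ennreal (V * (\<rho> k / 8) ^ N / 2))"
    unfolding F3 F4 K_def ..
  also have "\<dots> \<le> (\<integral>\<^sup>+h. (\<Sum>k\<in>{..<n}. ennreal (c k) * indicator (blk a (w k)) h) \<partial>lborel)"
    unfolding F1 by (rule F2)
  also have "\<dots> \<le> (\<integral>\<^sup>+h. ennreal (\<omega> h powr q / norm h powr e) \<partial>lborel)"
    by (intro nn_integral_mono pw)
  finally have fin: "ennreal (K * (1 / (2 * s))) \<le> (\<integral>\<^sup>+h. ennreal (\<omega> h powr q / norm h powr e) \<partial>lborel)" .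
  have "K * (1 / (2 * s)) = V / 8 ^ N / 4 * (a/2) powr q * norm v powr s / s"
    unfolding K_def using s by (simp add: field_simps)
  with fin show ?thesis by (simp add: V_def N_def s_def e_def)
qed

end


lemma shell_sum:
  fixes F :: "'a::euclidean_space \<Rightarrow> ennreal" and A B :: "nat \<Rightarrow> 'a set" and d e :: "nat \<Rightarrow> real"
  assumes A: "\<And>k. A k \<in> sets borel" and B: "\<And>k. B k \<in> sets borel"
    and d0: "\<And>k. 0 \<le> d k" and e0: "\<And>k. 0 \<le> e k"
    and cover: "\<And>h. F h \<noteq> 0 \<Longrightarrow> \<exists>k. (h \<in> A k \<and> F h \<le> ennreal (d k)) \<or> (h \<in> B k \<and> F h \<le> ennreal (e k))"
    and mA: "\<And>k. ennreal (d k) * emeasure lborel (A k) \<le> ennreal (C1 * y1 ^ k)"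
    and mB: "\<And>k. ennreal (e k) * emeasure lborel (B k) \<le> ennreal (C2 * y2 ^ k)"
    and y: "0 \<le> y1" "y1 < 1" "0 \<le> y2" "y2 < 1" "0 \<le> C1" "0 \<le> C2"
  shows "(\<integral>\<^sup>+h. F h \<partial>lborel) \<le> ennreal (C1 / (1 - y1) + C2 / (1 - y2))"
proof -
  define G where "G k h = ennreal (d k) * indicator (A k) h + ennreal (e k) * indicator (B k) h" for k h
  have pw: "F h \<le> (\<Sum>k. G k h)" for h
  proof (cases "F h = 0")
    case True thus ?thesis by simp
  next
    case False
    then obtain k where k: "(h \<in> A k \<and> F h \<le> ennreal (d k)) \<or> (h \<in> B k \<and> F h \<le> ennreal (e k))"
      using cover by blast
    have "F h \<le> G k h" using k
      by (auto simp: G_def intro: add_increasing add_increasing2)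
    also have "G k h = sum (\<lambda>k. G k h) {k}" by simp
    also have "\<dots> \<le> (\<Sum>k. G k h)" by (rule sum_le_suminf) auto
    finally show ?thesis .
  qed
  have "(\<integral>\<^sup>+h. F h \<partial>lborel) \<le> (\<integral>\<^sup>+h. (\<Sum>k. G k h) \<partial>lborel)"
    by (intro nn_integral_mono pw)
  also have "\<dots> = (\<Sum>k. \<integral>\<^sup>+h. G k h \<partial>lborel)"
    by (rule nn_integral_suminf) (use A B in \<open>simp add: G_def\<close>)
  also have "(\<lambda>k. \<integral>\<^sup>+h. G k h \<partial>lborel) = (\<lambda>k. ennreal (d k) * emeasure lborel (A k) + ennreal (e k) * emeasure lborel (B k))"
  proof
    fix k
    have "(\<integral>\<^sup>+h. G k h \<partial>lborel) = (\<integral>\<^sup>+h. ennreal (d k) * indicator (A k) h \<partial>lborel) + (\<integral>\<^sup>+h. ennreal (e k) * indicator (B k) h \<partial>lborel)"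
      unfolding G_def by (rule nn_integral_add) (use A B in auto)
    also have "\<dots> = ennreal (d k) * emeasure lborel (A k) + ennreal (e k) * emeasure lborel (B k)"
      using A B by (simp add: nn_integral_cmult_indicator)
    finally show "(\<integral>\<^sup>+h. G k h \<partial>lborel) = \<dots>" .
  qed
  also have "(\<Sum>k. ennreal (d k) * emeasure lborel (A k) + ennreal (e k) * emeasure lborel (B k))
           \<le> (\<Sum>k. ennreal (C1 * y1 ^ k + C2 * y2 ^ k))"
  proof (rule suminf_le)
    fix k
    have "ennreal (d k) * emeasure lborel (A k) + ennreal (e k) * emeasure lborel (B k)
          \<le> ennreal (C1 * y1 ^ k) + ennreal (C2 * y2 ^ k)" by (intro add_mono mA mB)
    also have "\<dots> = ennreal (C1 * y1 ^ k + C2 * y2 ^ k)" using y by (simp add: ennreal_plus)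
    finally show "ennreal (d k) * emeasure lborel (A k) + ennreal (e k) * emeasure lborel (B k)
          \<le> ennreal (C1 * y1 ^ k + C2 * y2 ^ k)" .
  qed auto
  also have "\<dots> = ennreal (\<Sum>k. C1 * y1 ^ k + C2 * y2 ^ k)"
    using y by (intro suminf_ennreal2) (auto intro!: summable_add summable_mult summable_geometric)
  also have "(\<Sum>k. C1 * y1 ^ k + C2 * y2 ^ k) = C1 / (1 - y1) + C2 / (1 - y2)"
  proof -
    have s1: "summable (\<lambda>k. C1 * y1 ^ k)" "summable (\<lambda>k. C2 * y2 ^ k)"
      using y by (auto intro!: summable_mult summable_geometric)
    have "(\<Sum>k. C1 * y1 ^ k + C2 * y2 ^ k) = (\<Sum>k. C1 * y1 ^ k) + (\<Sum>k. C2 * y2 ^ k)"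
      by (rule suminf_add[OF s1, symmetric])
    also have "\<dots> = C1 * (1 / (1 - y1)) + C2 * (1 / (1 - y2))"
      using y by (simp add: suminf_mult suminf_geometric)
    finally show ?thesis by simp
  qed
  finally show ?thesis .
qed



lemma exists_shell_small:
  fixes t :: real assumes "0 < t" "t < 1"
  shows "\<exists>k::nat. 2 powr (- real (Suc k)) \<le> t \<and> t < 2 powr (- real k)"
proof -
  have p2: "2 powr (- real n) = (1/2) ^ n" for n :: nat
    by (simp add: powr_minus powr_realpow power_one_over inverse_eq_divide)
  obtain n where "(1/2::real) ^ n < t" using real_arch_pow_inv[of t "1/2"] assms by auto
  moreover have "(1/2::real) ^ Suc n \<le> (1/2)^n" by (rule power_decreasing) auto
  ultimately have ex: "\<exists>n. (1/2::real) ^ Suc n \<le> t" by (intro exI[of _ n]) linarith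
  define k where "k = (LEAST n. (1/2::real) ^ Suc n \<le> t)"
  have k1: "(1/2::real) ^ Suc k \<le> t" unfolding k_def by (rule LeastI_ex[OF ex])
  have k2: "t < (1/2) ^ k"
  proof (cases k)
    case 0 thus ?thesis using assms by simp
  next
    case (Suc m)
    have "\<not> (1/2::real) ^ Suc m \<le> t"
      using not_less_Least[of m "\<lambda>n. (1/2::real) ^ Suc n \<le> t"] Suc unfolding k_def by simp
    thus ?thesis using Suc by simp
  qed
  show ?thesis
  proof (intro exI[of _ k] conjI)
    show "2 powr (- real (Suc k)) \<le> t" unfolding p2 by (rule k1)
    show "t < 2 powr (- real k)" unfolding p2 by (rule k2)
  qed
qed

lemma exists_shell_large:
  fixes t :: real assumes "1 \<le> t"
  shows "\<exists>k::nat. 2 powr (real k) \<le> t \<and> t < 2 powr (real (Suc k))"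
proof -
  have p2: "2 powr (real n) = 2 ^ n" for n :: nat by (simp add: powr_realpow)
  obtain n where "t < (2::real) ^ n" using real_arch_pow[of 2 t] by auto
  moreover have "(2::real) ^ n \<le> 2 ^ Suc n" by (rule power_increasing) auto
  ultimately have ex: "\<exists>n. t < (2::real) ^ Suc n" by (intro exI[of _ n]) linarith
  define k where "k = (LEAST n. t < (2::real) ^ Suc n)"
  have k1: "t < 2 ^ Suc k" unfolding k_def by (rule LeastI_ex[OF ex])
  have k2: "2 ^ k \<le> t"
  proof (cases k)
    case 0 thus ?thesis using assms by simp
  next
    case (Suc m)
    have "\<not> t < (2::real) ^ Suc m"
      using not_less_Least[of m "\<lambda>n. t < (2::real) ^ Suc n"] Suc unfolding k_def by simp
    thus ?thesis using Suc by simp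
  qed
  show ?thesis
  proof (intro exI[of _ k] conjI)
    show "2 powr real k \<le> t" unfolding p2 by (rule k2)
    show "t < 2 powr real (Suc k)" unfolding p2 by (rule k1)
  qed
qed

lemma one_minus_exp_bound:
  fixes s :: real assumes s: "0 < s" "s \<le> 1"
  shows "1 / (1 - 2 powr (- s)) \<le> 2 / (s * ln 2)"
proof -
  define t where "t = s * ln 2"
  have t: "0 < t" "t \<le> 1" using s ln_2_less_1 by (auto simp: t_def intro: mult_le_one)
  have e: "2 powr (- s) = exp (- t)" by (simp add: powr_def t_def)
  have "1 + t \<le> exp t" by (rule exp_ge_add_one_self)
  hence "exp (- t) \<le> 1 / (1 + t)" using t by (simp add: exp_minus field_simps)
  hence "1 - exp (- t) \<ge> t / (1 + t)" using t by (simp add: field_simps)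
  moreover have "t / (1 + t) \<ge> t / 2" using t by (intro divide_left_mono) auto
  ultimately have "1 - exp (- t) \<ge> t / 2" by linarith
  hence "1 / (1 - exp (- t)) \<le> 1 / (t / 2)" using t by (intro divide_left_mono) auto
  thus ?thesis by (simp add: e t_def)
qed

lemma pow2_pow: "((2::real) powr a) ^ n = 2 powr (a * real n)"
proof -
  have "((2::real) powr a) ^ n = (2 powr a) powr real n" by (rule powr_realpow[symmetric]) simp
  also have "\<dots> = 2 powr (a * real n)" by (rule powr_powr)
  finally show ?thesis .
qed

lemma emeasure_ball0_le:
  assumes "S \<subseteq> ball (0::'a::euclidean_space) R" "0 \<le> R"
  shows "emeasure lborel S \<le> ennreal (unit_ball_vol (real DIM('a)) * R ^ DIM('a))"
proof -
  have "emeasure lborel S \<le> emeasure lborel (ball (0::'a) R)"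
    by (rule emeasure_mono[OF assms(1)]) simp
  also have "\<dots> = ennreal (unit_ball_vol (real DIM('a)) * R ^ DIM('a))"
    by (rule emeasure_ball) (use assms in simp)
  finally show ?thesis .
qed

lemma upper_integral:
  fixes \<omega> :: "'a::euclidean_space \<Rightarrow> real"
  assumes nonneg: "\<And>h. 0 \<le> \<omega> h" and lipK: "\<And>h. \<omega> h \<le> K * norm h" and bM: "\<And>h. \<omega> h \<le> M"
    and K: "0 \<le> K" and M: "0 \<le> M" and r: "1/2 \<le> r" "r < 1" and q: "1 \<le> q" and s1: "q * (1 - r) \<le> 1"
  shows "(\<integral>\<^sup>+h. ennreal (\<omega> h powr q / norm h powr (real DIM('a) + r * q)) \<partial>lborel)
     \<le> ennreal (K powr q * (unit_ball_vol (real DIM('a)) * 2 powr real DIM('a)) * (2 / (q * (1 - r) * ln 2))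
              + M powr q * (unit_ball_vol (real DIM('a)) * 2 powr real DIM('a)) / (1 - 2 powr (- 1/2)))"
proof -
  define N where "N = real DIM('a)"
  define V where "V = unit_ball_vol N"
  define s where "s = q * (1 - r)"
  have N1: "1 \<le> N" by (simp add: N_def DIM_positive Suc_le_eq)
  have s: "0 < s" "s \<le> 1" using r q s1 by (auto simp: s_def)
  have V: "0 \<le> V" using N1 by (simp add: V_def)
  define A where "A k = {h::'a. 2 powr (- real (Suc k)) \<le> norm h \<and> norm h < 2 powr (- real k)}" for k
  define B where "B k = {h::'a. 2 powr (real k) \<le> norm h \<and> norm h < 2 powr (real (Suc k))}" for k
  define d where "d k = K powr q / (2 powr (- real (Suc k))) powr (N - s)" for k
  define e where "e k = M powr q / (2 powr (real k)) powr (N + 1/2)" for k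
  define F where "F h = ennreal (\<omega> h powr q / norm h powr (N + r * q))" for h
  have eN: "N + r * q = q + (N - s)" by (simp add: s_def algebra_simps)
  have A_sets: "A k \<in> sets borel" for k unfolding A_def by measurable
  have B_sets: "B k \<in> sets borel" for k unfolding B_def by measurable
  have cover: "\<exists>k. (h \<in> A k \<and> F h \<le> ennreal (d k)) \<or> (h \<in> B k \<and> F h \<le> ennreal (e k))"
    if Fh: "F h \<noteq> 0" for h
  proof -
    have h0: "h \<noteq> 0" using Fh by (auto simp: F_def)
    hence nh: "0 < norm h" by simp
    show ?thesis
    proof (cases "norm h < 1")
      case True
      then obtain k where k: "2 powr (- real (Suc k)) \<le> norm h" "norm h < 2 powr (- real k)"
        using exists_shell_small[OF nh] by auto
      have "\<omega> h powr q / norm h powr (N + r * q) \<le> (K * norm h) powr q / norm h powr (N + r * q)"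
        using nonneg lipK q nh by (intro divide_right_mono powr_mono2) auto
      also have "\<dots> = K powr q / norm h powr (N - s)"
        using nh K by (simp add: eN powr_add powr_mult)
      also have "\<dots> \<le> d k" unfolding d_def
        using k nh s N1 K by (intro divide_left_mono powr_mono2 mult_pos_pos) auto
      finally have "F h \<le> ennreal (d k)" unfolding F_def by (rule ennreal_leI)
      thus ?thesis using k by (auto simp: A_def)
    next
      case False
      hence h1: "1 \<le> norm h" by simp
      then obtain k where k: "2 powr (real k) \<le> norm h" "norm h < 2 powr (real (Suc k))"
        using exists_shell_large by blast
      have "\<omega> h powr q / norm h powr (N + r * q) \<le> M powr q / norm h powr (N + r * q)"
        using nonneg bM q nh by (intro divide_right_mono powr_mono2) auto
      also have "\<dots> \<le> M powr q / norm h powr (N + 1/2)"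
      proof (rule divide_left_mono)
        have "r * 1 \<le> r * q" using r q by (intro mult_left_mono) auto
        hence "1/2 \<le> r * q" using r by linarith
        thus "norm h powr (N + 1/2) \<le> norm h powr (N + r * q)" using h1 by (intro powr_mono) auto
      qed (use nh in auto)
      also have "\<dots> \<le> e k" unfolding e_def
        using k nh N1 M by (intro divide_left_mono powr_mono2 mult_pos_pos) auto
      finally have "F h \<le> ennreal (e k)" unfolding F_def by (rule ennreal_leI)
      thus ?thesis using k by (auto simp: B_def)
    qed
  qed
  have mA: "ennreal (d k) * emeasure lborel (A k) \<le> ennreal (K powr q * V * 2 powr N * (2 powr (- s)) ^ k)" for k
  proof -
    have "A k \<subseteq> ball 0 (2 powr (- real k))" by (auto simp: A_def)
    hence "emeasure lborel (A k) \<le> ennreal (V * (2 powr (- real k)) ^ DIM('a))"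
      unfolding V_def N_def by (rule emeasure_ball0_le) simp
    hence "ennreal (d k) * emeasure lborel (A k) \<le> ennreal (d k) * ennreal (V * (2 powr (- real k)) ^ DIM('a))"
      by (rule mult_left_mono) simp
    also have "\<dots> = ennreal (d k * (V * (2 powr (- real k)) ^ DIM('a)))"
      by (rule ennreal_mult[symmetric]) (use V in \<open>simp_all add: d_def\<close>)
    also have "d k * (V * (2 powr (- real k)) ^ DIM('a)) = K powr q * V * 2 powr (N - s - s * real k)"
    proof -
      have e1: "(2 powr (- real k)) ^ DIM('a) = 2 powr (- real k * N)" by (simp add: pow2_pow N_def)
      have e2: "(2 powr (- real (Suc k))) powr (N - s) = 2 powr (- real (Suc k) * (N - s))" by (rule powr_powr)
      have e3: "2 powr (- real k * N) / 2 powr (- real (Suc k) * (N - s)) = 2 powr (N - s - s * real k)"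
        by (simp add: powr_diff[symmetric] algebra_simps)
      have "d k * (V * (2 powr (- real k)) ^ DIM('a)) = K powr q * V * (2 powr (- real k * N) / 2 powr (- real (Suc k) * (N - s)))"
        unfolding d_def e1 e2 by (simp add: field_simps)
      thus ?thesis unfolding e3 .
    qed
    also have "ennreal (K powr q * V * 2 powr (N - s - s * real k)) \<le> ennreal (K powr q * V * 2 powr N * (2 powr (- s)) ^ k)"
    proof (rule ennreal_leI)
      have "2 powr (N - s - s * real k) \<le> 2 powr (N - s * real k)" using s by (intro powr_mono) auto
      also have "\<dots> = 2 powr N * (2 powr (- s)) ^ k"
        unfolding pow2_pow by (simp add: powr_add[symmetric])
      finally have le: "2 powr (N - s - s * real k) \<le> 2 powr N * (2 powr (- s)) ^ k" .
      have "K powr q * V * 2 powr (N - s - s * real k) \<le> K powr q * V * (2 powr N * (2 powr (- s)) ^ k)"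
        by (rule mult_left_mono[OF le]) (use V in simp)
      thus "K powr q * V * 2 powr (N - s - s * real k) \<le> K powr q * V * 2 powr N * (2 powr (- s)) ^ k"
        by (simp only: mult.assoc)
    qed
    finally show ?thesis .
  qed
  have mB: "ennreal (e k) * emeasure lborel (B k) \<le> ennreal (M powr q * V * 2 powr N * (2 powr (- 1/2)) ^ k)" for k
  proof -
    have "B k \<subseteq> ball 0 (2 powr (real (Suc k)))" by (auto simp: B_def)
    hence "emeasure lborel (B k) \<le> ennreal (V * (2 powr (real (Suc k))) ^ DIM('a))"
      unfolding V_def N_def by (rule emeasure_ball0_le) simp
    hence "ennreal (e k) * emeasure lborel (B k) \<le> ennreal (e k) * ennreal (V * (2 powr (real (Suc k))) ^ DIM('a))"
      by (rule mult_left_mono) simp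
    also have "\<dots> = ennreal (e k * (V * (2 powr (real (Suc k))) ^ DIM('a)))"
      by (rule ennreal_mult[symmetric]) (use V in \<open>simp_all add: e_def\<close>)
    also have "e k * (V * (2 powr (real (Suc k))) ^ DIM('a)) = M powr q * V * 2 powr N * (2 powr (- 1/2)) ^ k"
    proof -
      have e1: "(2 powr (real (Suc k))) ^ DIM('a) = 2 powr (real (Suc k) * N)" by (simp add: pow2_pow N_def)
      have e2: "(2 powr (real k)) powr (N + 1/2) = 2 powr (real k * (N + 1/2))" by (rule powr_powr)
      have e3: "2 powr (real (Suc k) * N) / 2 powr (real k * (N + 1/2)) = 2 powr N * (2 powr (- 1/2)) ^ k"
        by (simp add: pow2_pow powr_diff[symmetric] powr_add[symmetric] algebra_simps)
      have "e k * (V * (2 powr (real (Suc k))) ^ DIM('a)) = M powr q * V * (2 powr (real (Suc k) * N) / 2 powr (real k * (N + 1/2)))"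
        unfolding e_def e1 e2 by (simp add: field_simps)
      thus ?thesis unfolding e3 by (simp add: mult.assoc)
    qed
    finally show ?thesis .
  qed
  have y1: "2 powr (- s) < 1" using s by (simp add: powr_minus_divide)
  have y2: "2 powr (- 1/2) < (1::real)" by (simp add: powr_minus_divide)
  have "(\<integral>\<^sup>+h. F h \<partial>lborel) \<le> ennreal (K powr q * V * 2 powr N / (1 - 2 powr (- s)) + M powr q * V * 2 powr N / (1 - 2 powr (- 1/2)))"
    by (rule shell_sum[OF A_sets B_sets _ _ cover mA mB])
       (use s V K M y1 y2 in \<open>auto simp: d_def e_def\<close>)
  also have "K powr q * V * 2 powr N / (1 - 2 powr (- s)) \<le> K powr q * V * 2 powr N * (2 / (s * ln 2))"
  proof -
    have "K powr q * V * 2 powr N / (1 - 2 powr (- s)) = K powr q * V * 2 powr N * (1 / (1 - 2 powr (- s)))" by simp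
    also have "\<dots> \<le> K powr q * V * 2 powr N * (2 / (s * ln 2))"
      using one_minus_exp_bound[OF s] V by (intro mult_left_mono) auto
    finally show ?thesis .
  qed
  hence "ennreal (K powr q * V * 2 powr N / (1 - 2 powr (- s)) + M powr q * V * 2 powr N / (1 - 2 powr (- 1/2)))
        \<le> ennreal (K powr q * V * 2 powr N * (2 / (s * ln 2)) + M powr q * V * 2 powr N / (1 - 2 powr (- 1/2)))"
    by (intro ennreal_leI) simp
  finally show ?thesis by (simp add: F_def N_def V_def s_def mult.assoc)
qed



lemma powr_sum_le:
  fixes a b p :: real assumes "0 \<le> a" "0 \<le> b" "0 < p" "p \<le> 1"
  shows "(a + b) powr p \<le> 2 * (a powr p + b powr p)"
proof -
  have m: "(2 * m) powr p \<le> 2 * m powr p" if "0 \<le> m" for m :: real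
  proof -
    have "(2 * m) powr p = 2 powr p * m powr p" using that by (simp add: powr_mult)
    also have "2 powr p \<le> 2 powr 1" using assms by (intro powr_mono) auto
    hence "2 powr p * m powr p \<le> 2 * m powr p" by (intro mult_right_mono) auto
    finally show ?thesis by simp
  qed
  show ?thesis
  proof (cases "a \<le> b")
    case True
    have "(a + b) powr p \<le> (2 * b) powr p" using assms True by (intro powr_mono2) auto
    also have "\<dots> \<le> 2 * b powr p" using m assms by auto
    also have "\<dots> \<le> 2 * (a powr p + b powr p)" by simp
    finally show ?thesis .
  next
    case False
    have "(a + b) powr p \<le> (2 * a) powr p" using assms False by (intro powr_mono2) auto
    also have "\<dots> \<le> 2 * a powr p" using m assms by auto
    also have "\<dots> \<le> 2 * (a powr p + b powr p)" by simp
    finally show ?thesis .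
  qed
qed

lemma powr_ge_min:
  fixes E q :: real assumes "0 < E" "1 \<le> q"
  shows "min E 1 \<le> E powr (1/q)"
proof (cases "E \<ge> 1")
  case True
  hence "1 \<le> E powr (1/q)" using assms by (intro ge_one_powr_ge_zero) auto
  thus ?thesis by simp
next
  case False
  hence "E powr 1 \<le> E powr (1/q)" using assms by (intro powr_mono') auto
  thus ?thesis using assms by simp
qed

lemma powr_le_max:
  fixes X q :: real assumes "0 \<le> X" "1 \<le> q"
  shows "X powr (1/q) \<le> max X 1"
proof (cases "X \<ge> 1")
  case True
  hence "X powr (1/q) \<le> X powr 1" using assms by (intro powr_mono) auto
  thus ?thesis using True by simp
next
  case False
  hence "X powr (1/q) \<le> 1" using assms by (intro powr_le1) auto
  thus ?thesis by simp
qed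

lemma tendsto_one_minus_powr:
  assumes "0 < p"
  shows "((\<lambda>r. (1 - r) powr p) \<longlongrightarrow> 0) (at_left (1::real))"
proof (rule tendsto_zero_powrI)
  show "((\<lambda>r. 1 - r) \<longlongrightarrow> 0) (at_left (1::real))"
    by (rule tendsto_eq_intros refl)+ (auto intro: tendsto_ident_at)
  show "((\<lambda>r. p) \<longlongrightarrow> p) (at_left (1::real))" by simp
  have "eventually (\<lambda>x. x \<in> {0<..<1::real}) (at_left 1)" by (rule eventually_at_left_real) simp
  thus "\<forall>\<^sub>F r in at_left (1::real). 0 \<le> 1 - r" by (rule eventually_mono) auto
qed (use assms in auto)

lemma tendsto_powr_one_minus:
  assumes "0 < t"
  shows "((\<lambda>r. t powr (1 - r)) \<longlongrightarrow> 1) (at_left (1::real))"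
proof -
  have "((\<lambda>r. t powr (1 - r)) \<longlongrightarrow> t powr (1 - 1)) (at_left (1::real))"
    by (intro tendsto_powr tendsto_const tendsto_diff tendsto_ident_at) (use assms in auto)
  thus ?thesis using assms by simp
qed



lemma lower_r:
  fixes L T r q :: real and I :: ennreal and B :: ereal
  assumes B: "B = ereal L + (if I = \<infinity> then \<infinity> else ereal (enn2real I powr (1/q)))"
    and L: "0 \<le> L" and IT: "ennreal T \<le> I" and T: "0 \<le> T" and r: "r < 1" and q: "0 < q"
  shows "ereal (((1-r) * T) powr (1/q)) \<le> ereal ((1-r) powr (1/q)) * B"
proof (cases "I = \<infinity>")
  case True
  hence "B = \<infinity>" using B by simp
  moreover have "0 < (1-r) powr (1/q)" using r by simp
  ultimately show ?thesis by simp
next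
  case False
  hence B': "B = ereal (L + enn2real I powr (1/q))" using B by simp
  have "T \<le> enn2real I"
    using enn2real_mono[OF IT] False T by (simp add: less_top)
  hence "T powr (1/q) \<le> enn2real I powr (1/q)" using T q by (intro powr_mono2) auto
  hence "(1-r) powr (1/q) * T powr (1/q) \<le> (1-r) powr (1/q) * (L + enn2real I powr (1/q))"
    using L by (intro mult_left_mono) auto
  moreover have "((1-r) * T) powr (1/q) = (1-r) powr (1/q) * T powr (1/q)"
    using r T by (simp add: powr_mult)
  ultimately show ?thesis unfolding B' by simp
qed

lemma upper_r:
  fixes L U r q :: real and I :: ennreal and B :: ereal
  assumes B: "B = ereal L + (if I = \<infinity> then \<infinity> else ereal (enn2real I powr (1/q)))"
    and L: "0 \<le> L" and IU: "I \<le> ennreal U" and U: "0 \<le> U" and r: "r < 1" and q: "0 < q"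
  shows "ereal ((1-r) powr (1/q)) * B \<le> ereal ((1-r) powr (1/q) * L + ((1-r) * U) powr (1/q))"
proof -
  have False': "I \<noteq> \<infinity>" proof assume "I = \<infinity>" with IU have "\<infinity> \<le> ennreal U" by simp thus False by (simp add: top_unique) qed
  hence B': "B = ereal (L + enn2real I powr (1/q))" using B by simp
  have "enn2real I \<le> U" using enn2real_mono[OF IU] U by simp
  hence "enn2real I powr (1/q) \<le> U powr (1/q)" using q by (intro powr_mono2) auto
  hence "(1-r) powr (1/q) * (L + enn2real I powr (1/q)) \<le> (1-r) powr (1/q) * (L + U powr (1/q))"
    by (intro mult_left_mono) auto
  moreover have "((1-r) * U) powr (1/q) = (1-r) powr (1/q) * U powr (1/q)"
    using r U by (simp add: powr_mult)
  ultimately show ?thesis unfolding B' by (simp add: algebra_simps)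
qed

lemma Linf_W:
  fixes f g :: "'a::euclidean_space \<Rightarrow> real"
  assumes f: "f \<in> borel_measurable lebesgue" and g: "g \<in> borel_measurable borel"
    and ae: "AE x in lborel. f x = g x"
  shows "Linf_norm f = esssup lborel (\<lambda>x. ereal \<bar>g x\<bar>)"
proof -
  have gmE: "(\<lambda>x. ereal \<bar>g x\<bar>) \<in> borel_measurable borel"
    using g by (intro borel_measurable_ereal borel_measurable_abs)
  have gmE2: "(\<lambda>x. ereal \<bar>g x\<bar>) \<in> borel_measurable lebesgue"
    using gmE by (simp add: measurable_completion)
  have fmE: "(\<lambda>x. ereal \<bar>f x\<bar>) \<in> borel_measurable lebesgue"
    using f by (intro borel_measurable_ereal borel_measurable_abs)
  have "Linf_norm f = esssup lebesgue (\<lambda>x. ereal \<bar>g x\<bar>)"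
    unfolding Linf_norm_def by (rule esssup_AE_cong[OF fmE gmE2]) (use ae in \<open>auto simp: AE_completion_iff\<close>)
  also have "\<dots> = esssup lborel (\<lambda>x. ereal \<bar>g x\<bar>)" by (rule esssup_lebesgue_lborel[OF gmE])
  finally show ?thesis .
qed

lemma alg1:
  fixes r q l P Q W D :: real
  assumes "r < 1" "0 < q" "0 < l"
  shows "(1 - r) * (P * W * (2 / (q * (1 - r) * l)) + Q * W / D) = P * (W * (2 / l)) / q + (1 - r) * (Q * (W / D))"
  using assms by (simp add: field_simps)

lemma main_bounds:
  fixes f :: "'a::euclidean_space \<Rightarrow> real" and q :: real
  defines "E \<equiv> unit_ball_vol (real DIM('a)) / 8 ^ DIM('a) / 4"
    and "X \<equiv> unit_ball_vol (real DIM('a)) * 2 powr real DIM('a) * (2 / ln 2)"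
    and "Y \<equiv> unit_ball_vol (real DIM('a)) * 2 powr real DIM('a) / (1 - 2 powr (- 1/2))"
  assumes q: "1 \<le> q" and fL: "in_Linf f" and lim: "besov_limsup q f < \<infinity>"
  shows "in_C01 f \<and>
          ereal (min E 1 / 2 * q powr (- 1 / q)) * lip_seminorm f \<le> besov_limsup q f \<and>
          besov_limsup q f \<le> ereal (2 * max X 1 * q powr (- 1 / q)) * lip_seminorm f"
proof -
  define c where "c = min E 1 / 2"
  define C where "C = 2 * max X 1"
  define cq where "cq = c * q powr (- 1 / q)"
  define A where "A = besov_limsup q f"
  have V: "0 < unit_ball_vol (real DIM('a))" by simp
  have E: "0 < E" unfolding E_def using V by simp
  have c: "0 < c" unfolding c_def using E by simp
  have qpos: "0 < q" using q by simp
  have cq: "0 < cq" unfolding cq_def using c qpos by simp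
  have y2: "2 powr (- 1/2) < (1::real)" by (simp add: powr_minus_divide)
  have X: "0 \<le> X" unfolding X_def using V by (simp add: ln_2_less_1)
  have Y: "0 \<le> Y" unfolding Y_def using V y2 by simp
  have qinv: "q powr (- 1 / q) = 1 / q powr (1/q)"
  proof -
    have "- 1 / q = - (1/q)" by simp
    thus ?thesis by (simp only: powr_minus_divide)
  qed
  have fm: "f \<in> borel_measurable lebesgue" and fB: "Linf_norm f < \<infinity>"
    using fL by (auto simp: in_Linf_def)
  obtain g where g[measurable]: "g \<in> borel_measurable borel" and ae: "AE x in lborel. f x = g x"
    using completion_ex_borel_measurable_real[OF fm] by fastforce
  define Bg where "Bg = esssup lborel (\<lambda>x. ereal \<bar>g x\<bar>)"
  have LB: "Linf_norm f = Bg" unfolding Bg_def by (rule Linf_W[OF fm g ae])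
  have Bg0: "0 \<le> Bg"
  proof -
    have "esssup lborel (\<lambda>x::'a. 0::ereal) \<le> Bg"
      unfolding Bg_def by (rule esssup_mono[where f="\<lambda>x::'a. 0::ereal"]) auto
    thus ?thesis by (simp add: esssup_const)
  qed
  define L where "L = real_of_ereal Bg"
  have BgL: "Bg = ereal L" using Bg0 fB LB unfolding L_def by (cases Bg) auto
  have L0: "0 \<le> L" using Bg0 BgL by simp
  define \<omega> where "\<omega> h = real_of_ereal (W g h)" for h
  have Wom: "W g h = ereal (\<omega> h)" for h
  proof -
    have "0 \<le> W g h" by (rule W_nonneg[OF g])
    moreover have "W g h \<le> 2 * Bg" unfolding Bg_def by (rule W_bound[OF g])
    ultimately show ?thesis unfolding \<omega>_def using BgL by (cases "W g h") auto
  qed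
  have om0: "0 \<le> \<omega> h" for h using W_nonneg[OF g, of h] Wom[of h] by simp
  have omB: "\<omega> h \<le> 2 * L" for h using W_bound[OF g, of h] Wom[of h] BgL by (simp add: Bg_def)
  have omS: "\<omega> (h + k) \<le> \<omega> h + \<omega> k" for h k using W_sub[OF g, of h k] Wom by simp
  have omZ: "\<omega> 0 = 0" using W_zero[OF g] Wom[of 0] by simp
  have omM: "\<omega> \<in> borel_measurable borel"
    unfolding \<omega>_def using W_measurable[OF g] by measurable
  have dn: "diff_norm f h = ereal (\<omega> h)" for h using diff_norm_W[OF fm g ae] Wom by simp
  define I where "I r = (\<integral>\<^sup>+h. ennreal (\<omega> h powr q / norm h powr (real DIM('a) + r * q)) \<partial>lborel)" for r
  have bes: "besov_norm r q f = ereal L + (if I r = \<infinity> then \<infinity> else ereal (enn2real (I r) powr (1/q)))" for r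
    unfolding besov_norm_def Let_def dn LB BgL I_def by simp
  define G where "G r = ereal ((1 - r) powr (1 / q)) * besov_norm r q f" for r
  have A_def': "A = Limsup (at_left 1) G" unfolding A_def G_def besov_limsup_def ..
  have ev01: "eventually (\<lambda>r. r \<in> {0<..<1::real}) (at_left 1)" by (rule eventually_at_left_real) simp

  have LOW: "ereal (cq * (\<omega> v / norm v)) \<le> A" if v: "v \<noteq> 0" for v
  proof -
    define a where "a = \<omega> v / norm v"
    have nv: "0 < norm v" using v by simp
    have a0: "0 \<le> a" unfolding a_def using om0 nv by simp
    have av: "a * norm v \<le> \<omega> v" unfolding a_def using nv by simp
    define lb where "lb r = (E / q) powr (1/q) * (a/2) * norm v powr (1 - r)" for r
    have ev: "eventually (\<lambda>r. ereal (lb r) \<le> G r) (at_left 1)"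
      using ev01
    proof eventually_elim
      case (elim r)
      hence r: "0 < r" "r < 1" by auto
      define T where "T = E * (a/2) powr q * norm v powr (q * (1 - r)) / (q * (1 - r))"
      have IT: "ennreal T \<le> I r"
        unfolding T_def E_def I_def
        by (rule lower_integral[OF omM om0 omS v a0 av r q])
      have T0: "0 \<le> T" unfolding T_def using E r qpos by simp
      have "ereal (((1-r) * T) powr (1/q)) \<le> G r"
        unfolding G_def by (rule lower_r[OF bes L0 IT T0 r(2) qpos])
      moreover have "((1-r) * T) powr (1/q) = lb r"
      proof -
        have "(1-r) * T = (E / q) * ((a/2) powr q * norm v powr (q * (1 - r)))"
          unfolding T_def using r qpos by (simp add: field_simps)
        hence "((1-r) * T) powr (1/q) = (E/q) powr (1/q) * (((a/2) powr q) powr (1/q) * (norm v powr (q * (1 - r))) powr (1/q))"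
          by (simp only: powr_mult)
        also have "((a/2) powr q) powr (1/q) = a/2"
          using qpos a0 by (simp add: powr_powr)
        also have "(norm v powr (q * (1 - r))) powr (1/q) = norm v powr (1 - r)"
          using qpos by (simp add: powr_powr)
        finally show ?thesis by (simp add: lb_def mult.assoc)
      qed
      ultimately show ?case by simp
    qed
    have tl: "(lb \<longlongrightarrow> (E / q) powr (1/q) * (a/2) * 1) (at_left 1)"
      unfolding lb_def by (intro tendsto_mult tendsto_const tendsto_powr_one_minus nv)
    have "ereal ((E / q) powr (1/q) * (a/2)) = Liminf (at_left 1) (\<lambda>r. ereal (lb r))"
      using tl by (intro lim_imp_Liminf[symmetric]) auto
    also have "\<dots> \<le> Liminf (at_left 1) G" by (rule Liminf_mono[OF ev])
    also have "\<dots> \<le> Limsup (at_left 1) G" by (rule Liminf_le_Limsup) simp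
    finally have l: "ereal ((E / q) powr (1/q) * (a/2)) \<le> A" unfolding A_def' .
    have "cq * a \<le> (E / q) powr (1/q) * (a/2)"
    proof -
      have "(E / q) powr (1/q) = E powr (1/q) * q powr (- 1 / q)"
        using E qpos by (simp add: powr_divide powr_minus_divide)
      moreover have "min E 1 \<le> E powr (1/q)" by (rule powr_ge_min[OF E q])
      ultimately have "c * q powr (- 1 / q) \<le> (E / q) powr (1/q) / 2"
        unfolding c_def by (simp add: mult_right_mono divide_right_mono)
      hence "c * q powr (- 1 / q) * a \<le> (E / q) powr (1/q) / 2 * a" using a0 by (rule mult_right_mono)
      thus ?thesis unfolding cq_def by simp
    qed
    hence "ereal (cq * a) \<le> ereal ((E / q) powr (1/q) * (a/2))" by simp
    hence "ereal (cq * a) \<le> A" using l by (rule order_trans)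
    thus ?thesis unfolding a_def .
  qed

  obtain v0 :: 'a where v0: "v0 \<noteq> 0" using nonzero_Basis SOME_Basis by blast
  have A0: "0 \<le> A"
  proof -
    have "0 \<le> cq * (\<omega> v0 / norm v0)" using cq om0[of v0] by simp
    hence "ereal 0 \<le> ereal (cq * (\<omega> v0 / norm v0))" by simp
    from order_trans[OF this LOW[OF v0]] show ?thesis by (simp add: zero_ereal_def)
  qed
  have Afin: "A < \<infinity>" using lim unfolding A_def .
  define Ar where "Ar = real_of_ereal A"
  have AAr: "A = ereal Ar" using A0 Afin unfolding Ar_def by (cases A) auto
  define Kr where "Kr = Ar / cq"
  have lipeq: "lip_seminorm f = (SUP h\<in>-{0}. ereal (\<omega> h / norm h))"
    unfolding lip_seminorm_def dn by (intro SUP_cong refl) (auto simp: ereal_divide)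
  have term_le: "\<omega> h / norm h \<le> Kr" if "h \<noteq> 0" for h
  proof -
    have "cq * (\<omega> h / norm h) \<le> Ar" using LOW[OF that] AAr by simp
    thus ?thesis unfolding Kr_def using cq by (simp add: pos_le_divide_eq mult.commute)
  qed
  have lip_le: "lip_seminorm f \<le> ereal Kr"
    unfolding lipeq by (rule SUP_least) (use term_le in auto)
  have lip_ge: "ereal (\<omega> v0 / norm v0) \<le> lip_seminorm f"
    unfolding lipeq by (rule SUP_upper) (use v0 in auto)
  define K where "K = real_of_ereal (lip_seminorm f)"
  have lipK: "lip_seminorm f = ereal K"
  proof -
    have "ereal 0 \<le> ereal (\<omega> v0 / norm v0)" using om0[of v0] by simp
    from order_trans[OF this lip_ge] have "0 \<le> lip_seminorm f" by (simp add: zero_ereal_def)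
    thus ?thesis using lip_le unfolding K_def by (cases "lip_seminorm f") auto
  qed
  have K0: "0 \<le> K"
  proof -
    have "\<omega> v0 / norm v0 \<le> K" using lip_ge lipK by simp
    moreover have "0 \<le> \<omega> v0 / norm v0" using om0[of v0] by simp
    ultimately show ?thesis by linarith
  qed
  have KKr: "K \<le> Kr" using lip_le lipK by simp
  have omK: "\<omega> h \<le> K * norm h" for h
  proof (cases "h = 0")
    case True thus ?thesis using omZ by simp
  next
    case False
    have "ereal (\<omega> h / norm h) \<le> lip_seminorm f"
      unfolding lipeq by (rule SUP_upper) (use False in auto)
    hence "\<omega> h / norm h \<le> K" using lipK by simp
    thus ?thesis using False by (simp add: divide_le_eq mult.commute)
  qed
  have C01: "in_C01 f" unfolding in_C01_def using fL lipK by simp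
  have LOWER: "ereal cq * lip_seminorm f \<le> A"
  proof -
    have "cq * K \<le> cq * Kr" using KKr cq by (intro mult_left_mono) auto
    also have "cq * Kr = Ar" unfolding Kr_def using cq by simp
    finally show ?thesis using lipK AAr by simp
  qed

  define u where "u = 2 * (K * (X / q) powr (1/q))"
  define gg where "gg r = (1 - r) powr (1/q) * L + 2 * (K * (X / q) powr (1/q) + (1 - r) powr (1/q) * (2 * L) * Y powr (1/q))" for r
  have evU: "eventually (\<lambda>r. r \<in> {max (1/2) (1 - 1/q) <..< 1::real}) (at_left 1)"
    by (rule eventually_at_left_real) (use qpos in simp)
  have evG: "eventually (\<lambda>r. G r \<le> ereal (gg r)) (at_left 1)"
    using evU
  proof eventually_elim
    case (elim r)
    hence r: "1/2 \<le> r" "r < 1" "1 - 1/q < r" by auto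
    have s1: "q * (1 - r) \<le> 1"
    proof -
      have "1 - r < 1/q" using r by simp
      hence "q * (1 - r) < q * (1/q)" using qpos by (intro mult_strict_left_mono) auto
      thus ?thesis using qpos by simp
    qed
    define U where "U = K powr q * (unit_ball_vol (real DIM('a)) * 2 powr real DIM('a)) * (2 / (q * (1 - r) * ln 2))
              + (2 * L) powr q * (unit_ball_vol (real DIM('a)) * 2 powr real DIM('a)) / (1 - 2 powr (- 1/2))"
    have IU: "I r \<le> ennreal U"
      unfolding I_def U_def
      by (rule upper_integral[OF om0 omK omB K0 _ r(1,2) q s1]) (use L0 in simp)
    have U0: "0 \<le> U"
    proof -
      have "0 \<le> 2 / (q * (1 - r) * ln 2)" using r qpos by simp
      moreover have "0 < 1 - 2 powr (- 1/2::real)" using y2 by simp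
      ultimately show ?thesis unfolding U_def using V r qpos
        by (intro add_nonneg_nonneg mult_nonneg_nonneg divide_nonneg_nonneg) auto
    qed
    have "G r \<le> ereal ((1-r) powr (1/q) * L + ((1-r) * U) powr (1/q))"
      unfolding G_def by (rule upper_r[OF bes L0 IU U0 r(2) qpos])
    also have "((1-r) * U) powr (1/q) \<le> 2 * (K * (X / q) powr (1/q) + (1 - r) powr (1/q) * (2 * L) * Y powr (1/q))"
    proof -
      have eqU: "(1-r) * U = K powr q * X / q + (1 - r) * ((2 * L) powr q * Y)"
        unfolding U_def X_def Y_def using r qpos by (intro alg1) auto
      have "((1-r) * U) powr (1/q) \<le> 2 * ((K powr q * X / q) powr (1/q) + ((1 - r) * ((2 * L) powr q * Y)) powr (1/q))"
        unfolding eqU using X Y r qpos q by (intro powr_sum_le) auto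
      also have "(K powr q * X / q) powr (1/q) = K * (X / q) powr (1/q)"
      proof -
        have "(K powr q * X / q) powr (1/q) = (K powr q) powr (1/q) * (X / q) powr (1/q)"
          using K0 X qpos by (simp add: powr_mult[symmetric] times_divide_eq_right)
        also have "(K powr q) powr (1/q) = K" using K0 qpos by (simp add: powr_powr)
        finally show ?thesis .
      qed
      also have "((1 - r) * ((2 * L) powr q * Y)) powr (1/q) = (1 - r) powr (1/q) * (2 * L) * Y powr (1/q)"
      proof -
        have "((1 - r) * ((2 * L) powr q * Y)) powr (1/q) = (1 - r) powr (1/q) * ((2 * L) powr q) powr (1/q) * Y powr (1/q)"
          using L0 Y r by (simp add: powr_mult)
        also have "((2 * L) powr q) powr (1/q) = 2 * L" using L0 qpos by (simp add: powr_powr)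
        finally show ?thesis .
      qed
      finally show ?thesis .
    qed
    hence "ereal ((1-r) powr (1/q) * L + ((1-r) * U) powr (1/q)) \<le> ereal (gg r)"
      unfolding gg_def by simp
    finally show ?case .
  qed
  have tg: "(gg \<longlongrightarrow> 0 * L + 2 * (K * (X / q) powr (1/q) + 0 * (2 * L) * Y powr (1/q))) (at_left 1)"
  proof -
    have t0: "((\<lambda>r. (1-r) powr (1/q)) \<longlongrightarrow> 0) (at_left (1::real))"
      by (rule tendsto_one_minus_powr) (use qpos in simp)
    show ?thesis unfolding gg_def
      by (intro tendsto_add tendsto_mult t0 tendsto_const)
  qed
  have "A \<le> Limsup (at_left 1) (\<lambda>r. ereal (gg r))" unfolding A_def' by (rule Limsup_mono[OF evG])
  also have "\<dots> = ereal u"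
    using tg unfolding u_def by (intro lim_imp_Limsup) auto
  also have "u \<le> C * q powr (- 1 / q) * K"
  proof -
    have "(X / q) powr (1/q) = X powr (1/q) * q powr (- 1 / q)"
      using X qpos by (simp add: powr_divide powr_minus_divide)
    moreover have "X powr (1/q) \<le> max X 1" by (rule powr_le_max[OF X q])
    ultimately have "(X / q) powr (1/q) \<le> max X 1 * q powr (- 1 / q)"
      by (simp add: mult_right_mono)
    hence "K * (X / q) powr (1/q) \<le> K * (max X 1 * q powr (- 1 / q))" using K0 by (rule mult_left_mono)
    thus ?thesis unfolding u_def C_def by (simp add: mult_ac)
  qed
  hence "ereal u \<le> ereal (C * q powr (- 1 / q)) * lip_seminorm f" using lipK by simp
  finally have UPPER: "A \<le> ereal (C * q powr (- 1 / q)) * lip_seminorm f" .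
  show ?thesis using C01 LOWER UPPER unfolding A_def cq_def c_def C_def by simp
qed

theorem theorem2p12:
  "\<exists>c C :: real. 0 < c \<and> c \<le> C \<and>
     (\<forall>q::real. \<forall>f :: 'a::euclidean_space \<Rightarrow> real.
        q \<ge> 1 \<longrightarrow> in_Linf f \<longrightarrow> besov_limsup q f < \<infinity> \<longrightarrow>
          in_C01 f \<and>
          ereal (c * q powr (- 1 / q)) * lip_seminorm f \<le> besov_limsup q f \<and>
          besov_limsup q f \<le> ereal (C * q powr (- 1 / q)) * lip_seminorm f)"
proof -
  define E where "E = unit_ball_vol (real DIM('a)) / 8 ^ DIM('a) / 4"
  define X where "X = unit_ball_vol (real DIM('a)) * 2 powr real DIM('a) * (2 / ln 2)"
  have E: "0 < E" unfolding E_def by simp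
  have c1: "0 < min E 1 / 2" using E by simp
  have c2: "min E 1 / 2 \<le> 2 * max X 1" by simp
  have main: "\<forall>q::real. \<forall>f :: 'a \<Rightarrow> real.
        q \<ge> 1 \<longrightarrow> in_Linf f \<longrightarrow> besov_limsup q f < \<infinity> \<longrightarrow>
          in_C01 f \<and>
          ereal (min E 1 / 2 * q powr (- 1 / q)) * lip_seminorm f \<le> besov_limsup q f \<and>
          besov_limsup q f \<le> ereal (2 * max X 1 * q powr (- 1 / q)) * lip_seminorm f"
    unfolding E_def X_def using main_bounds by blast
  show ?thesis using c1 c2 main by blast
qed

end
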